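(* Let $\Gamma$ be a finite simple graph and $A_\Gamma$ the associated right-angled Artin group with standard generating set $V(\Gamma)$, and let $X = V(\Gamma)\cup V(\Gamma)^{-1}$. If $\phi \in \mathrm{Aut}(A_\Gamma)$ is length-preserving (with respect to word length over $X$), then $\phi$ is a finite composition of inversions and graph automorphisms.
   Context: The right-angled Artin group (RAAG) of a finite simple graph $\Gamma$ is $A_\Gamma = \langle V(\Gamma) \mid [s,t]=1 \text{ for all } \{s,t\}\in E(\Gamma)\rangle$ (generators commute iff they are joined by an edge). For $g \in A_\Gamma$, $|g|$ denotes the length of a shortest word over $X$ representing $g$. An automorphism $\phi$ is length-preserving if $|\phi(g)| = |g|$ for every $g\in A_\Gamma$. An inversion is the automorphism sending one vertex $x\in V(\Gamma)$ to $x^{-1}$ and fixing all other vertices. A graph automorphism is the automorphism of $A_\Gamma$ induced by a graph automorphism of $\Gamma$ (permuting the vertex generators). *)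

theory Defs
  imports "HOL-Algebra.Group"
begin

definition simple_graph :: "'a set \<Rightarrow> ('a \<Rightarrow> 'a \<Rightarrow> bool) \<Rightarrow> bool" where
  "simple_graph V E \<longleftrightarrow> finite V \<and> (\<forall>x y. E x y \<longrightarrow> x \<in> V \<and> y \<in> V)
     \<and> (\<forall>x y. E x y \<longrightarrow> E y x) \<and> (\<forall>x. \<not> E x x)"

text \<open>Letters of X = V \<union> V^{-1}: (v, True) is v, (v, False) is v^{-1}.\<close>
type_synonym 'a letter = "'a \<times> bool"

definition raag_words :: "'a set \<Rightarrow> 'a letter list set" where
  "raag_words V = {w. \<forall>l\<in>set w. fst l \<in> V}"

inductive_set raag_step :: "('a \<Rightarrow> 'a \<Rightarrow> bool) \<Rightarrow> ('a letter list \<times> 'a letter list) set"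
  for E where
  cancel: "(u @ [(x,b),(x,\<not>b)] @ v, u @ v) \<in> raag_step E"
| comm: "E x y \<Longrightarrow> (u @ [(x,b),(y,c)] @ v, u @ [(y,c),(x,b)] @ v) \<in> raag_step E"

definition raag_rel :: "'a set \<Rightarrow> ('a \<Rightarrow> 'a \<Rightarrow> bool) \<Rightarrow> ('a letter list \<times> 'a letter list) set" where
  "raag_rel V E = Restr ((Restr (raag_step E \<union> (raag_step E)\<inverse>) (raag_words V))\<^sup>*) (raag_words V)"

definition RAAG :: "'a set \<Rightarrow> ('a \<Rightarrow> 'a \<Rightarrow> bool) \<Rightarrow> 'a letter list set monoid" where
  "RAAG V E = \<lparr> carrier = raag_words V // raag_rel V E,
               mult = (\<lambda>A B. raag_rel V E `` {a @ b | a b. a \<in> A \<and> b \<in> B}),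
               one = raag_rel V E `` {[]} \<rparr>"

definition raag_len :: "'a letter list set \<Rightarrow> nat" where
  "raag_len g = (LEAST n. \<exists>w\<in>g. length w = n)"

definition length_preserving :: "'a set \<Rightarrow> ('a \<Rightarrow> 'a \<Rightarrow> bool) \<Rightarrow> ('a letter list set \<Rightarrow> 'a letter list set) \<Rightarrow> bool" where
  "length_preserving V E \<phi> \<longleftrightarrow> (\<forall>g\<in>carrier (RAAG V E). raag_len (\<phi> g) = raag_len g)"

definition raag_map :: "'a set \<Rightarrow> ('a \<Rightarrow> 'a \<Rightarrow> bool) \<Rightarrow> ('a letter \<Rightarrow> 'a letter) \<Rightarrow> 'a letter list set \<Rightarrow> 'a letter list set" where
  "raag_map V E f g = raag_rel V E `` (map f ` g)"

definition flip_letter :: "'a \<Rightarrow> 'a letter \<Rightarrow> 'a letter" where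
  "flip_letter x l = (if fst l = x then (fst l, \<not> snd l) else l)"

definition inversion :: "'a set \<Rightarrow> ('a \<Rightarrow> 'a \<Rightarrow> bool) \<Rightarrow> 'a \<Rightarrow> 'a letter list set \<Rightarrow> 'a letter list set" where
  "inversion V E x = raag_map V E (flip_letter x)"

definition graph_aut_of :: "'a set \<Rightarrow> ('a \<Rightarrow> 'a \<Rightarrow> bool) \<Rightarrow> ('a \<Rightarrow> 'a) \<Rightarrow> bool" where
  "graph_aut_of V E \<sigma> \<longleftrightarrow> bij_betw \<sigma> V V \<and> (\<forall>x\<in>V. \<forall>y\<in>V. E x y \<longleftrightarrow> E (\<sigma> x) (\<sigma> y))"

definition induced_graph_aut :: "'a set \<Rightarrow> ('a \<Rightarrow> 'a \<Rightarrow> bool) \<Rightarrow> ('a \<Rightarrow> 'a) \<Rightarrow> 'a letter list set \<Rightarrow> 'a letter list set" where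
  "induced_graph_aut V E \<sigma> = raag_map V E (\<lambda>(v, b). (\<sigma> v, b))"

definition basic_auts :: "'a set \<Rightarrow> ('a \<Rightarrow> 'a \<Rightarrow> bool) \<Rightarrow> ('a letter list set \<Rightarrow> 'a letter list set) set" where
  "basic_auts V E = {inversion V E x | x. x \<in> V} \<union> {induced_graph_aut V E \<sigma> | \<sigma>. graph_aut_of V E \<sigma>}"

end

theory Submission
  imports Defs
begin

lemma W_app[simp]: "a @ b \<in> raag_words V \<longleftrightarrow> a \<in> raag_words V \<and> b \<in> raag_words V"
  by (auto simp: raag_words_def)
lemma W_Cons[simp]: "l # b \<in> raag_words V \<longleftrightarrow> fst l \<in> V \<and> b \<in> raag_words V"
  by (auto simp: raag_words_def)
lemma W_Nil[simp]: "[] \<in> raag_words V" by (simp add: raag_words_def)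

lemma rel_W: "(a,b) \<in> raag_rel V E \<Longrightarrow> a \<in> raag_words V \<and> b \<in> raag_words V"
  by (auto simp: raag_rel_def)

lemma rel_refl: "a \<in> raag_words V \<Longrightarrow> (a,a) \<in> raag_rel V E"
  by (auto simp: raag_rel_def)

lemma rel_step: "(x,y) \<in> raag_step E \<Longrightarrow> x \<in> raag_words V \<Longrightarrow> y \<in> raag_words V
  \<Longrightarrow> (x,y) \<in> raag_rel V E"
  unfolding raag_rel_def by blast

lemma rel_equiv: "equiv (raag_words V) (raag_rel V E)"
proof -
  let ?S = "Restr (raag_step E \<union> (raag_step E)\<inverse>) (raag_words V)"
  have "sym ?S" by (auto simp: sym_def)
  hence s: "sym (?S\<^sup>*)" by (rule sym_rtrancl)
  show ?thesis unfolding equiv_def raag_rel_def refl_on_def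
  proof (intro conjI)
    show "sym (Restr (?S\<^sup>*) (raag_words V))" using s by (auto simp: sym_def)
    show "trans (Restr (?S\<^sup>*) (raag_words V))" unfolding trans_def
      using rtrancl_trans[of _ _ ?S] by blast
  qed auto
qed

lemma rel_sym: "(a,b) \<in> raag_rel V E \<Longrightarrow> (b,a) \<in> raag_rel V E"
  using rel_equiv[of V E] unfolding equiv_def sym_def by blast

lemma rel_trans: "(a,b) \<in> raag_rel V E \<Longrightarrow> (b,c) \<in> raag_rel V E \<Longrightarrow> (a,c) \<in> raag_rel V E"
  using rel_equiv[of V E] unfolding equiv_def trans_def by blast

lemma rel_map:
  assumes F: "\<And>x y. (x,y) \<in> raag_step E \<Longrightarrow> x \<in> raag_words V \<Longrightarrow> y \<in> raag_words V
      \<Longrightarrow> (F x, F y) \<in> raag_rel V E"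
    and FW: "\<And>x. x \<in> raag_words V \<Longrightarrow> F x \<in> raag_words V"
    and ab: "(a,b) \<in> raag_rel V E"
  shows "(F a, F b) \<in> raag_rel V E"
proof -
  let ?S = "Restr (raag_step E \<union> (raag_step E)\<inverse>) (raag_words V)"
  from ab have st: "(a,b) \<in> ?S\<^sup>*" and aW: "a \<in> raag_words V" by (auto simp: raag_rel_def)
  from st show ?thesis
  proof (induction rule: rtrancl_induct)
    case base then show ?case by (simp add: rel_refl FW aW)
  next
    case (step y z)
    then have "(F y, F z) \<in> raag_rel V E" using F rel_sym by blast
    then show ?case using step.IH rel_trans by blast
  qed
qed

lemma rel_inv:
  assumes F: "\<And>x y. (x,y) \<in> raag_step E \<Longrightarrow> f x = f y"
    and ab: "(a,b) \<in> raag_rel V E"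
  shows "f a = f b"
proof -
  let ?S = "Restr (raag_step E \<union> (raag_step E)\<inverse>) (raag_words V)"
  from ab have st: "(a,b) \<in> ?S\<^sup>*" by (auto simp: raag_rel_def)
  from st show ?thesis
  proof (induction rule: rtrancl_induct)
    case base then show ?case by simp
  next
    case (step y z)
    then show ?case using F by auto
  qed
qed

lemma step_ctx: "(x,y) \<in> raag_step E \<Longrightarrow> (p @ x @ q, p @ y @ q) \<in> raag_step E"
proof (induction rule: raag_step.cases)
  case (cancel u a b v)
  have "((p@u) @ [(a,b),(a,\<not>b)] @ (v@q), (p@u) @ (v@q)) \<in> raag_step E" by (rule raag_step.cancel)
  then show ?case using cancel by simp
next
  case (comm a c u b d v)
  have "((p@u) @ [(a,b),(c,d)] @ (v@q), (p@u) @ [(c,d),(a,b)] @ (v@q)) \<in> raag_step E"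
    using comm by (intro raag_step.comm)
  then show ?case using comm by simp
qed

lemma rel_cong:
  assumes "(a,a') \<in> raag_rel V E" "(b,b') \<in> raag_rel V E"
  shows "(a@b, a'@b') \<in> raag_rel V E"
proof -
  have W: "a \<in> raag_words V" "a' \<in> raag_words V" "b \<in> raag_words V" "b' \<in> raag_words V"
    using assms rel_W by blast+
  have 1: "(a@b, a'@b) \<in> raag_rel V E"
    by (rule rel_map[where F="\<lambda>x. x@b", OF _ _ assms(1)])
      (use W step_ctx[of _ _ E "[]" b] in \<open>auto intro: rel_step\<close>)
  have 2: "(a'@b, a'@b') \<in> raag_rel V E"
    by (rule rel_map[where F="\<lambda>x. a'@x", OF _ _ assms(2)])
      (use W step_ctx[of _ _ E a' "[]"] in \<open>auto intro: rel_step\<close>)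
  show ?thesis using 1 2 rel_trans by blast
qed

lemma mult_cls:
  assumes "a \<in> raag_words V" "b \<in> raag_words V"
  shows "raag_rel V E `` {a} \<otimes>\<^bsub>RAAG V E\<^esub> raag_rel V E `` {b} = raag_rel V E `` {a @ b}"
proof -
  have "raag_rel V E `` {x @ y |x y. x \<in> raag_rel V E `` {a} \<and> y \<in> raag_rel V E `` {b}}
     = raag_rel V E `` {a @ b}"
  proof (intro equalityI subsetI)
    fix z assume "z \<in> raag_rel V E `` {x @ y |x y. x \<in> raag_rel V E `` {a} \<and> y \<in> raag_rel V E `` {b}}"
    then obtain x y where "(a,x) \<in> raag_rel V E" "(b,y) \<in> raag_rel V E" "(x@y, z) \<in> raag_rel V E"
      by auto
    then show "z \<in> raag_rel V E `` {a @ b}" using rel_cong rel_trans by blast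
  next
    fix z assume "z \<in> raag_rel V E `` {a @ b}"
    moreover have "a \<in> raag_rel V E `` {a}" "b \<in> raag_rel V E `` {b}" using assms rel_refl by auto
    ultimately show "z \<in> raag_rel V E `` {x @ y |x y. x \<in> raag_rel V E `` {a} \<and> y \<in> raag_rel V E `` {b}}"
      by blast
  qed
  then show ?thesis by (simp add: RAAG_def)
qed

definition ab :: "'a letter list \<Rightarrow> 'a \<Rightarrow> int" where
  "ab w v = sum_list (map (\<lambda>l. if fst l = v then (if snd l then 1 else -1) else 0) w)"

lemma ab_step: "(x,y) \<in> raag_step E \<Longrightarrow> ab x = ab y"
  by (induction rule: raag_step.cases) (auto simp: ab_def fun_eq_iff)

lemma ab_single: "ab [l] (fst l) \<noteq> 0"
  by (auto simp: ab_def)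

lemma ab_single2: "fst l' \<noteq> v \<Longrightarrow> ab [l'] v = 0"
  by (auto simp: ab_def)

lemma ab_Nil: "ab [] v = 0" by (simp add: ab_def)

lemma ab_pair: "ab [a,b] (fst a) = 0 \<Longrightarrow> b = (fst a, \<not> snd a)"
  by (cases a, cases b) (auto simp: ab_def split: if_splits)

definition T1 :: "nat \<Rightarrow> nat" where "T1 n = (if n = 0 then 1 else if n = 1 then 0 else n)"
definition T2 :: "nat \<Rightarrow> nat" where "T2 n = (if n = 1 then 2 else if n = 2 then 1 else n)"

definition pl :: "'a \<Rightarrow> 'a \<Rightarrow> 'a letter \<Rightarrow> nat \<Rightarrow> nat" where
  "pl u w l = (if fst l = u then T1 else if fst l = w then T2 else id)"

definition pe :: "'a \<Rightarrow> 'a \<Rightarrow> 'a letter list \<Rightarrow> nat \<Rightarrow> nat" where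
  "pe u w ls = foldr (\<lambda>l acc. pl u w l \<circ> acc) ls id"

lemma pe_app: "pe u w (a @ b) = pe u w a \<circ> pe u w b"
  by (induction a) (auto simp: pe_def)

lemma T11: "T1 \<circ> T1 = id" by (auto simp: T1_def fun_eq_iff)
lemma T22: "T2 \<circ> T2 = id" by (auto simp: T2_def fun_eq_iff)

lemma pl_inv: "pl u w (x,b) \<circ> pl u w (x,c) = id"
  by (auto simp: pl_def T11 T22)

lemma pe_step:
  assumes irr: "\<forall>x. \<not> E x x" and "\<not> E u w" "\<not> E w u" and "(a,b) \<in> raag_step E"
  shows "pe u w a = pe u w b"
  using assms(4)
proof (induction rule: raag_step.cases)
  case (cancel p x c q)
  then show ?case by (simp add: pe_app pe_def comp_assoc[symmetric] pl_inv)
next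
  case (comm x y p c d q)
  have "pl u w (x,c) \<circ> pl u w (y,d) = pl u w (y,d) \<circ> pl u w (x,c)"
    using comm assms(1-3) by (auto simp: pl_def)
  then show ?case using comm by (simp add: pe_app pe_def comp_assoc[symmetric])
qed

lemma pe_pair: "u \<noteq> w \<Longrightarrow> pe u w [(u,c),(w,d)] \<noteq> pe u w [(w,d),(u,c)]"
  by (auto simp: pe_def pl_def fun_eq_iff T1_def T2_def intro!: exI[of _ 0])


lemma ab_rel: "(a,b) \<in> raag_rel V E \<Longrightarrow> ab a = ab b"
  by (rule rel_inv[where f=ab]) (rule ab_step)

lemma pe_rel:
  assumes "\<forall>x. \<not> E x x" "\<not> E u w" "\<not> E w u" "(a,b) \<in> raag_rel V E"
  shows "pe u w a = pe u w b"
  by (rule rel_inv[where f="pe u w" and E=E, OF _ assms(4)]) (rule pe_step[where E=E, OF assms(1-3)])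

lemma step_map:
  assumes f1: "\<And>x b. f (x, \<not>b) = (fst (f (x,b)), \<not> snd (f (x,b)))"
    and f2: "\<And>x y b c. E x y \<Longrightarrow> E (fst (f (x,b))) (fst (f (y,c)))"
    and st: "(p,q) \<in> raag_step E"
  shows "(map f p, map f q) \<in> raag_step E"
  using st
proof (induction rule: raag_step.cases)
  case (cancel u x b v)
  obtain x' b' where fx: "f (x,b) = (x',b')" by (cases "f (x,b)")
  have "(map f u @ [(x',b'),(x',\<not>b')] @ map f v, map f u @ map f v) \<in> raag_step E"
    by (rule raag_step.cancel)
  then show ?case using cancel f1[of x b] fx by simp
next
  case (comm x y u b c v)
  obtain x' b' where fx: "f (x,b) = (x',b')" by (cases "f (x,b)")
  obtain y' c' where fy: "f (y,c) = (y',c')" by (cases "f (y,c)")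
  have "E x' y'" using f2[OF comm(3), of b c] fx fy by simp
  then have "(map f u @ [(x',b'),(y',c')] @ map f v, map f u @ [(y',c'),(x',b')] @ map f v) \<in> raag_step E"
    by (rule raag_step.comm)
  then show ?case using comm fx fy by simp
qed

lemma raag_map_cls:
  assumes fV: "\<And>l. fst l \<in> V \<Longrightarrow> fst (f l) \<in> V"
    and fstep: "\<And>x y. (x,y) \<in> raag_step E \<Longrightarrow> (map f x, map f y) \<in> raag_step E"
    and w: "w \<in> raag_words V"
  shows "raag_map V E f (raag_rel V E `` {w}) = raag_rel V E `` {map f w}"
proof -
  have mW: "map f x \<in> raag_words V" if "x \<in> raag_words V" for x
    using that fV by (auto simp: raag_words_def)
  have rm: "(map f a, map f b) \<in> raag_rel V E" if "(a,b) \<in> raag_rel V E" for a b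
    by (rule rel_map[OF _ _ that]) (auto intro: rel_step fstep mW)
  show ?thesis unfolding raag_map_def
  proof (intro equalityI subsetI)
    fix z assume "z \<in> raag_rel V E `` (map f ` raag_rel V E `` {w})"
    then obtain w' where "(w,w') \<in> raag_rel V E" "(map f w', z) \<in> raag_rel V E" by auto
    then show "z \<in> raag_rel V E `` {map f w}" using rm rel_trans by blast
  next
    fix z assume "z \<in> raag_rel V E `` {map f w}"
    moreover have "w \<in> raag_rel V E `` {w}" using w rel_refl by auto
    ultimately show "z \<in> raag_rel V E `` (map f ` raag_rel V E `` {w})" by blast
  qed
qed

lemma flip_step: "(x,y) \<in> raag_step E \<Longrightarrow> (map (flip_letter a) x, map (flip_letter a) y) \<in> raag_step E"
  by (rule step_map) (auto simp: flip_letter_def)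

lemma flips_fst: "fst (foldr (\<circ>) (map flip_letter ys) id l) = fst l"
  by (induction ys) (auto simp: flip_letter_def)

lemma flips_val: "distinct ys \<Longrightarrow> foldr (\<circ>) (map flip_letter ys) id (v,b) = (v, b \<noteq> (v \<in> set ys))"
  by (induction ys) (auto simp: flip_letter_def)

lemma inv_fold:
  assumes "w \<in> raag_words V"
  shows "foldr (\<circ>) (map (inversion V E) ys) id (raag_rel V E `` {w})
     = raag_rel V E `` {map (foldr (\<circ>) (map flip_letter ys) id) w}"
proof (induction ys)
  case Nil then show ?case by simp
next
  case (Cons a ys)
  let ?F = "foldr (\<circ>) (map flip_letter ys) id"
  have W: "map ?F w \<in> raag_words V" using assms by (auto simp: raag_words_def flips_fst)
  have "foldr (\<circ>) (map (inversion V E) (a#ys)) id (raag_rel V E `` {w})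
      = inversion V E a (foldr (\<circ>) (map (inversion V E) ys) id (raag_rel V E `` {w}))" by simp
  also have "\<dots> = inversion V E a (raag_rel V E `` {map ?F w})" using Cons.IH by (rule arg_cong)
  also have "\<dots> = raag_rel V E `` {map (flip_letter a) (map ?F w)}"
    unfolding inversion_def
    by (rule raag_map_cls[OF _ flip_step W]) (auto simp: flip_letter_def)
  also have "map (flip_letter a) (map ?F w) = map (foldr (\<circ>) (map flip_letter (a#ys)) id) w"
    by (simp only: map_map list.map foldr_Cons o_apply)
  finally show ?case .
qed


theorem lemma2p3:
  fixes V :: "'a set" and E :: "'a \<Rightarrow> 'a \<Rightarrow> bool"
    and \<phi> :: "'a letter list set \<Rightarrow> 'a letter list set"
  assumes "simple_graph V E"
    and "\<phi> \<in> iso (RAAG V E) (RAAG V E)"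
    and "length_preserving V E \<phi>"
  shows "\<exists>fs. set fs \<subseteq> basic_auts V E \<and>
           (\<forall>g\<in>carrier (RAAG V E). \<phi> g = foldr (\<circ>) fs id g)"
proof -
  let ?G = "RAAG V E"
  let ?R = "raag_rel V E"
  let ?W = "raag_words V"
  define cls where "cls w = ?R `` {w}" for w
  have SG: "finite V" "\<And>x y. E x y \<Longrightarrow> x \<in> V \<and> y \<in> V" "\<And>x y. E x y \<Longrightarrow> E y x" "\<And>x. \<not> E x x"
    using assms(1) unfolding simple_graph_def by blast+
  have irr: "\<forall>x. \<not> E x x" using SG(4) by blast
  have carr: "carrier ?G = ?W // ?R" by (simp add: RAAG_def)
  have cls_in: "cls w \<in> carrier ?G" if "w \<in> ?W" for w
    using that by (simp add: carr cls_def quotientI)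
  have cls_eq: "cls a = cls b \<longleftrightarrow> (a,b) \<in> ?R" if "a \<in> ?W" "b \<in> ?W" for a b
    unfolding cls_def by (rule eq_equiv_class_iff[OF rel_equiv that])
  have mem_cls: "z \<in> cls w \<longleftrightarrow> (w,z) \<in> ?R" for z w by (simp add: cls_def)
  have carrE: "\<exists>w\<in>?W. g = cls w" if "g \<in> carrier ?G" for g
    using that by (auto simp: carr cls_def elim!: quotientE)
  have mult: "cls a \<otimes>\<^bsub>?G\<^esub> cls b = cls (a@b)" if "a \<in> ?W" "b \<in> ?W" for a b
    unfolding cls_def by (rule mult_cls[OF that])
  from assms(2) have phom: "\<phi> \<in> hom ?G ?G" and pbij: "bij_betw \<phi> (carrier ?G) (carrier ?G)"
    by (auto simp: iso_def)
  have pin: "\<phi> g \<in> carrier ?G" if "g \<in> carrier ?G" for g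
    using phom that by (auto simp: hom_def)
  have pmult: "\<phi> (x \<otimes>\<^bsub>?G\<^esub> y) = \<phi> x \<otimes>\<^bsub>?G\<^esub> \<phi> y" if "x \<in> carrier ?G" "y \<in> carrier ?G" for x y
    using phom that by (auto simp: hom_def)
  have pinj: "inj_on \<phi> (carrier ?G)" using pbij by (simp add: bij_betw_def)
  have plen: "raag_len (\<phi> g) = raag_len g" if "g \<in> carrier ?G" for g
    using assms(3) that by (simp add: length_preserving_def)
  have len_le: "raag_len g \<le> length w" if "w \<in> g" for g w
    unfolding raag_len_def using that by (auto intro: Least_le)
  have len_ex: "\<exists>w\<in>g. length w = raag_len g" if "w0 \<in> g" for g w0
    unfolding raag_len_def by (rule LeastI_ex) (use that in auto)
  have one: "\<phi> (cls []) = cls []"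
  proof -
    have "raag_len (cls []) = 0" using len_le[of "[]" "cls []"] by (simp add: mem_cls rel_refl)
    hence l0: "raag_len (\<phi> (cls [])) = 0" using plen cls_in by simp
    obtain w0 where w0: "w0 \<in> ?W" "\<phi> (cls []) = cls w0" using carrE pin cls_in W_Nil by blast
    hence "w0 \<in> \<phi> (cls [])" by (simp add: mem_cls rel_refl)
    then obtain w where "w \<in> \<phi> (cls [])" "length w = 0" using len_ex l0 by metis
    hence "(w0, []) \<in> ?R" using w0 mem_cls by auto
    thus ?thesis using w0 cls_eq by simp
  qed
  have letter: "\<exists>l'. fst l' \<in> V \<and> \<phi> (cls [l]) = cls [l']" if "fst l \<in> V" for l
  proof -
    have lW: "[l] \<in> ?W" using that by simp
    have "raag_len (cls [l]) \<le> 1" using len_le[of "[l]" "cls [l]"] rel_refl[OF lW, of E] by (simp add: mem_cls)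
    moreover have "raag_len (cls [l]) \<noteq> 0"
    proof
      assume "raag_len (cls [l]) = 0"
      then obtain w where "w \<in> cls [l]" "length w = 0" using len_ex[of "[l]"] by (metis mem_cls rel_refl lW)
      hence "([l], []) \<in> ?R" by (simp add: mem_cls)
      hence "ab [l] = ab []" by (rule ab_rel)
      thus False using ab_single[of l] ab_Nil by metis
    qed
    ultimately have l1: "raag_len (\<phi> (cls [l])) = 1" using plen cls_in lW by simp
    obtain w0 where w0: "w0 \<in> ?W" "\<phi> (cls [l]) = cls w0" using carrE pin cls_in lW by blast
    hence "w0 \<in> \<phi> (cls [l])" by (simp add: mem_cls rel_refl)
    then obtain w where w: "w \<in> \<phi> (cls [l])" "length w = 1" using len_ex l1 by metis
    hence r: "(w0, w) \<in> ?R" using w0 mem_cls by auto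
    hence wW: "w \<in> ?W" using rel_W by blast
    from w(2) obtain l' where l': "w = [l']" by (cases w) auto
    have "\<phi> (cls [l]) = cls w" using w0 r wW cls_eq by simp
    thus ?thesis using wW l' by (intro exI[of _ l']) auto
  qed
  define h where "h l = (SOME l'. fst l' \<in> V \<and> \<phi> (cls [l]) = cls [l'])" for l
  have hprop: "fst (h l) \<in> V \<and> \<phi> (cls [l]) = cls [h l]" if "fst l \<in> V" for l
    unfolding h_def using someI_ex[OF letter[OF that]] .
  have hV: "fst (h l) \<in> V" if "fst l \<in> V" for l using hprop that by blast
  have hcls: "\<phi> (cls [l]) = cls [h l]" if "fst l \<in> V" for l using hprop that by blast
  have mapW: "map h w \<in> ?W" if "w \<in> ?W" for w
    using that hV by (auto simp: raag_words_def)
  have phi_word: "\<phi> (cls w) = cls (map h w)" if "w \<in> ?W" for w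
    using that
  proof (induction w)
    case Nil then show ?case using one by simp
  next
    case (Cons l w)
    have lV: "fst l \<in> V" and wW: "w \<in> ?W" using Cons.prems by auto
    have "cls (l#w) = cls [l] \<otimes>\<^bsub>?G\<^esub> cls w" using mult[of "[l]" w] lV wW by simp
    hence "\<phi> (cls (l#w)) = \<phi> (cls [l]) \<otimes>\<^bsub>?G\<^esub> \<phi> (cls w)" using pmult cls_in lV wW by simp
    also have "\<dots> = cls [h l] \<otimes>\<^bsub>?G\<^esub> cls (map h w)" using hcls lV Cons.IH wW by simp
    also have "\<dots> = cls (h l # map h w)" using mult[of "[h l]" "map h w"] hV lV mapW wW by simp
    finally show ?case by simp
  qed
  have hneg: "h (v,False) = (fst (h (v,True)), \<not> snd (h (v,True)))" if "v \<in> V" for v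
  proof -
    have st: "([(v,True),(v,False)], []) \<in> raag_step E"
      using raag_step.cancel[of "[]" v True "[]" E] by simp
    have "cls [(v,True),(v,False)] = cls []" using cls_eq rel_step[OF st] that by simp
    hence "cls [h (v,True), h (v,False)] = cls []" using phi_word[of "[(v,True),(v,False)]"] one that by simp
    moreover have "[h (v,True), h (v,False)] \<in> ?W" using hV that by simp
    ultimately have "([h (v,True), h (v,False)], []) \<in> ?R" using cls_eq by simp
    hence "ab [h (v,True), h (v,False)] = ab []" by (rule ab_rel)
    hence "ab [h (v,True), h (v,False)] (fst (h (v,True))) = 0" by (simp add: ab_Nil)
    thus ?thesis by (rule ab_pair)
  qed
  define \<sigma> where "\<sigma> v = fst (h (v,True))" for v
  define \<tau> where "\<tau> v = snd (h (v,True))" for v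
  have hform: "h (v,b) = (\<sigma> v, b = \<tau> v)" if "v \<in> V" for v b
    using hneg[OF that] by (cases b) (auto simp: \<sigma>_def \<tau>_def)
  have \<sigma>V: "\<sigma> v \<in> V" if "v \<in> V" for v using hV that by (simp add: \<sigma>_def)
  have sinj: "inj_on \<sigma> V"
  proof (rule inj_onI, rule ccontr)
    fix v v' assume v: "v \<in> V" "v' \<in> V" "\<sigma> v = \<sigma> v'" "v \<noteq> v'"
    let ?b = "(\<tau> v' = \<tau> v)"
    have "h (v', True) = h (v, ?b)" using hform v by auto
    hence "\<phi> (cls [(v',True)]) = \<phi> (cls [(v,?b)])" using hcls v by simp
    hence "cls [(v',True)] = cls [(v,?b)]"
      by (rule inj_onD[OF pinj]) (use v in \<open>auto intro!: cls_in\<close>)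
    hence "([(v',True)], [(v,?b)]) \<in> ?R" using cls_eq v by simp
    hence "ab [(v',True)] = ab [(v,?b)]" by (rule ab_rel)
    hence "ab [(v',True)] v = ab [(v,?b)] v" by simp
    thus False using ab_single[of "(v,?b)"] ab_single2[of "(v',True)" v] v by simp
  qed
  have \<sigma>img: "\<sigma> ` V = V" by (rule endo_inj_surj[OF SG(1) _ sinj]) (use \<sigma>V in auto)
  have eforw: "E (\<sigma> x) (\<sigma> y)" if "E x y" for x y
  proof (rule ccontr)
    assume ne: "\<not> E (\<sigma> x) (\<sigma> y)"
    have xy: "x \<in> V" "y \<in> V" "x \<noteq> y" using SG that by blast+
    have ne2: "\<not> E (\<sigma> y) (\<sigma> x)" using ne SG(3) by blast
    have sne: "\<sigma> x \<noteq> \<sigma> y" using sinj xy by (auto dest: inj_onD)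
    have st: "([(x,True),(y,True)], [(y,True),(x,True)]) \<in> raag_step E"
      using raag_step.comm[where E=E and x=x and y=y, OF that, of "[]" True True "[]"] by simp
    have "cls [(x,True),(y,True)] = cls [(y,True),(x,True)]" using cls_eq rel_step[OF st] xy by simp
    hence "cls [h (x,True), h (y,True)] = cls [h (y,True), h (x,True)]"
      using phi_word[of "[(x,True),(y,True)]"] phi_word[of "[(y,True),(x,True)]"] xy by simp
    moreover have "[h (x,True), h (y,True)] \<in> ?W" "[h (y,True), h (x,True)] \<in> ?W" using hV xy by simp_all
    ultimately have "([h (x,True), h (y,True)], [h (y,True), h (x,True)]) \<in> ?R" using cls_eq by simp
    hence "pe (\<sigma> x) (\<sigma> y) [h (x,True), h (y,True)] = pe (\<sigma> x) (\<sigma> y) [h (y,True), h (x,True)]"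
      by (rule pe_rel[where E=E and u="\<sigma> x" and w="\<sigma> y", OF irr ne ne2])
    thus False using pe_pair[OF sne, of "\<tau> x" "\<tau> y"] hform xy by simp
  qed
  let ?Es = "{(x,y). E x y}"
  have finEs: "finite ?Es" using finite_subset[of ?Es "V \<times> V"] SG(1,2) by auto
  have m_inj: "inj_on (\<lambda>(x,y). (\<sigma> x, \<sigma> y)) ?Es" using sinj SG(2) by (auto simp: inj_on_def)
  have m_sub: "(\<lambda>(x,y). (\<sigma> x, \<sigma> y)) ` ?Es \<subseteq> ?Es" using eforw by auto
  have m_eq: "(\<lambda>(x,y). (\<sigma> x, \<sigma> y)) ` ?Es = ?Es" by (rule endo_inj_surj[OF finEs m_sub m_inj])
  have eback: "E x y" if "x \<in> V" "y \<in> V" "E (\<sigma> x) (\<sigma> y)" for x y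
  proof -
    have "(\<sigma> x, \<sigma> y) \<in> (\<lambda>(x,y). (\<sigma> x, \<sigma> y)) ` ?Es" using m_eq that by simp
    then obtain x' y' where e: "E x' y'" "\<sigma> x' = \<sigma> x" "\<sigma> y' = \<sigma> y" by auto
    have "x' = x" "y' = y" using e sinj SG(2)[OF e(1)] that by (auto dest: inj_onD)
    thus ?thesis using e by simp
  qed
  have gaut: "graph_aut_of V E \<sigma>"
    unfolding graph_aut_of_def bij_betw_def using sinj \<sigma>img eforw eback by blast
  obtain xs where xs: "set xs = {v \<in> V. \<not> \<tau> v}" "distinct xs"
    using finite_distinct_list[of "{v \<in> V. \<not> \<tau> v}"] SG(1) by auto
  define gm where "gm = (\<lambda>(v::'a, b::bool). (\<sigma> v, b))"
  have gstep: "(map gm x, map gm y) \<in> raag_step E" if "(x,y) \<in> raag_step E" for x y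
    by (rule step_map[OF _ _ that]) (auto simp: gm_def eforw)
  let ?fs = "induced_graph_aut V E \<sigma> # map (inversion V E) xs"
  show ?thesis
  proof (intro exI conjI ballI)
    show "set ?fs \<subseteq> basic_auts V E" using gaut xs by (auto simp: basic_auts_def)
    fix g assume "g \<in> carrier ?G"
    then obtain w where w: "w \<in> ?W" "g = cls w" using carrE by blast
    let ?F = "foldr (\<circ>) (map flip_letter xs) id"
    have FW: "map ?F w \<in> ?W" using w by (auto simp: raag_words_def flips_fst)
    have "foldr (\<circ>) ?fs id g = induced_graph_aut V E \<sigma> (foldr (\<circ>) (map (inversion V E) xs) id (cls w))"
      using w by simp
    also have "\<dots> = induced_graph_aut V E \<sigma> (cls (map ?F w))"
      using inv_fold[OF w(1)] by (simp add: cls_def)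
    also have "\<dots> = cls (map gm (map ?F w))"
      unfolding induced_graph_aut_def cls_def gm_def[symmetric]
      by (rule raag_map_cls[OF _ gstep FW]) (auto simp: gm_def \<sigma>V)
    also have "map gm (map ?F w) = map h w"
    proof -
      have "gm (?F l) = h l" if "l \<in> set w" for l
      proof -
        obtain v b where l: "l = (v,b)" by (cases l)
        have "v \<in> V" using w(1) that l by (auto simp: raag_words_def)
        thus ?thesis using l hform flips_val[OF xs(2), of v b] xs(1) by (auto simp: gm_def)
      qed
      thus ?thesis by simp
    qed
    finally have X: "foldr (\<circ>) ?fs id g = cls (map h w)" .
    show "\<phi> g = foldr (\<circ>) ?fs id g" unfolding X by (simp only: w(2) phi_word[OF w(1)])
  qed
qed

end
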